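(* Let $r,s,k$ be integers with $1\le k\le\min\{r,s\}$, and let $F$ be a field with $|F|\ge k+2$. Then there exist $A\in F^{r\times r}$ and $B\in F^{s\times s}$ such that the linear code $C(A,B)$ has dimension $k$ and minimum distance $d=\lfloor r/k\rfloor s$.
   Context: $C(A,B):=\{X\in F^{r\times s}\mid AX=XB\}$, viewed as a linear code of length $rs$ by regarding each matrix as the vector of its $rs$ entries. The minimum (Hamming) distance of a subspace $C$ is $\min\{\text{number of nonzero entries of }w\mid w\in C,\ w\neq0\}$. *)

theory Defs
  imports "HOL-Analysis.Analysis"
begin

definition flatten :: "'a^'s^'r \<Rightarrow> 'a^('r \<times> 's)" where
  "flatten X = (\<chi> p. X $ fst p $ snd p)"

definition CAB :: "'a::field^'r^'r \<Rightarrow> 'a^'s^'s \<Rightarrow> ('a^('r \<times> 's)) set" where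
  "CAB A B = flatten ` {X :: 'a^'s^'r. A ** X = X ** B}"

definition hamming_weight :: "'a::zero^'n \<Rightarrow> nat" where
  "hamming_weight w = card {p. w $ p \<noteq> 0}"

definition min_distance :: "('a::zero^'n) set \<Rightarrow> nat" where
  "min_distance C = (INF w \<in> C - {0}. hamming_weight w)"

end

theory Submission imports Defs begin

lemma cyc:
  fixes h :: "'s::finite \<Rightarrow> nat" and Z :: "'s \<Rightarrow> 'a"
  assumes hb: "bij_betw h UNIV {0..<CARD('s)}"
    and eq: "\<And>j. Z (inv h (Suc (h j) mod CARD('s))) = Z j"
  shows "Z j = Z j0"
proof -
  let ?s = "CARD('s)"
  have hi: "\<And>n. n < ?s \<Longrightarrow> h (inv h n) = n"
    using hb by (simp add: bij_betw_inv_into_right)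
  have ih: "\<And>j. inv h (h j) = j" using hb by (meson bij_betw_imp_inj_on inv_f_f)
  have hl: "\<And>j. h j < ?s" using hb by (auto simp: bij_betw_def)
  have W: "n < ?s \<Longrightarrow> Z (inv h n) = Z (inv h 0)" for n
  proof (induction n)
    case 0 then show ?case by simp
  next
    case (Suc n)
    have "Z (inv h (Suc n)) = Z (inv h (Suc (h (inv h n)) mod ?s))"
      using Suc.prems hi[of n] by simp
    also have "\<dots> = Z (inv h n)" by (rule eq)
    finally show ?case using Suc by simp
  qed
  show ?thesis using W[OF hl[of j]] W[OF hl[of j0]] ih by metis
qed

lemma nx_surj:
  fixes h :: "'s::finite \<Rightarrow> nat"
  assumes hb: "bij_betw h UNIV {0..<CARD('s)}"
  shows "\<exists>j. inv h (Suc (h j) mod CARD('s)) = j'"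
proof -
  let ?s = "CARD('s)"
  have hi: "\<And>n. n < ?s \<Longrightarrow> h (inv h n) = n"
    using hb by (simp add: bij_betw_inv_into_right)
  have ih: "\<And>j. inv h (h j) = j" using hb by (meson bij_betw_imp_inj_on inv_f_f)
  have hl: "\<And>j. h j < ?s" using hb by (auto simp: bij_betw_def)
  have sp: "?s > 0" by simp
  define m where "m = (h j' + (?s - 1)) mod ?s"
  have "m < ?s" unfolding m_def by simp
  hence "Suc (h (inv h m)) mod ?s = Suc (h j' + (?s - 1)) mod ?s"
    using hi unfolding m_def by (simp add: mod_Suc_eq)
  also have "Suc (h j' + (?s - 1)) = h j' + ?s" using sp by simp
  also have "(h j' + ?s) mod ?s = h j'" using hl[of j'] by simp
  finally show ?thesis using ih by metis
qed

theorem theorem4p3: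
  fixes k :: nat
  assumes "1 \<le> k" and "k \<le> min CARD('r::finite) CARD('s::finite)"
    and "infinite (UNIV :: 'a::field set) \<or> k + 2 \<le> CARD('a)"
  shows "\<exists>(A :: 'a^'r^'r) (B :: 'a^'s^'s).
           vec.dim (CAB A B) = k \<and>
           min_distance (CAB A B) = (CARD('r) div k) * CARD('s)"
proof -
  define r where "r = CARD('r)"
  define s where "s = CARD('s)"
  obtain g :: "'r \<Rightarrow> nat" where gb: "bij_betw g UNIV {0..<r}"
    using ex_bij_betw_finite_nat[of "UNIV :: 'r set"] unfolding r_def by auto
  obtain h :: "'s \<Rightarrow> nat" where hb: "bij_betw h UNIV {0..<s}"
    using ex_bij_betw_finite_nat[of "UNIV :: 's set"] unfolding s_def by auto
  have gi: "\<And>n. n < r \<Longrightarrow> g (inv g n) = n"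
    using gb by (simp add: bij_betw_inv_into_right)
  have ig: "\<And>i. inv g (g i) = i" using gb by (meson bij_betw_imp_inj_on inv_f_f)
  have gl: "\<And>i. g i < r" using gb by (auto simp: bij_betw_def)
  have kr: "k \<le> r" "k \<le> s" using assms(2) unfolding r_def s_def by auto
  define q where "q = r div k"
  have q1: "q \<ge> 1" unfolding q_def using kr assms(1) by (metis One_nat_def Suc_leI div_greater_zero_iff le_less_trans less_numeral_extra(1) not_le)
  have qk: "q * k \<le> r" unfolding q_def by (metis times_div_less_eq_dividend mult.commute) 
  define bl where "bl n = min (n div q) (k - 1)" for n
  define f where "f i = inv g (q * bl (g i))" for i
  define nx where "nx j = inv h (Suc (h j) mod s)" for j
  define A :: "'a^'r^'r" where "A = (\<chi> i l. if l = f i then 1 else 0)"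
  define B :: "'a^'s^'s" where "B = (\<chi> m j. if m = nx j then 1 else 0)"
  have bllt: "bl n < k" for n unfolding bl_def using assms(1) by auto
  have qbl: "q * bl n < r" for n
  proof -
    have "q * bl n < q * k" using bllt[of n] q1 by simp
    thus ?thesis using qk by linarith
  qed
  have blq: "t < k \<Longrightarrow> bl (q * t) = t" for t unfolding bl_def using q1 by simp
  have blf: "bl (g (f i)) = bl (g i)" for i
    unfolding f_def using gi[OF qbl] blq[OF bllt] by simp
  have ff: "f (f i) = f i" for i using blf unfolding f_def by simp
  have key: "A ** X = X ** B \<longleftrightarrow> (\<forall>i j. X$(f i)$j = X$i$(nx j))" for X
  proof -
    have "(A ** X)$i$j = X$(f i)$j" for i j
      proof -
      have "(A ** X)$i$j = (\<Sum>l\<in>UNIV. if l = f i then X$l$j else 0)"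
        unfolding A_def matrix_matrix_mult_def by (simp only: vec_lambda_beta) (intro sum.cong, auto)
      thus ?thesis by simp
    qed
    moreover have "(X ** B)$i$j = X$i$(nx j)" for i j
      proof -
      have "(X ** B)$i$j = (\<Sum>m\<in>UNIV. if m = nx j then X$i$m else 0)"
        unfolding B_def matrix_matrix_mult_def by (simp only: vec_lambda_beta) (intro sum.cong, auto)
      thus ?thesis by simp
    qed
    ultimately show ?thesis by (simp add: vec_eq_iff)
  qed
  define S :: "('a^('r\<times>'s)) set" where "S = {(\<chi> p. y (fst p)) | y. \<forall>i. y (f i) = y i}"
  have CS: "CAB A B = S"
  proof
    show "CAB A B \<subseteq> S"
    proof
      fix w assume "w \<in> CAB A B"
      then obtain X where X: "A ** X = X ** B" and w: "w = flatten X"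
        unfolding CAB_def by auto
      have e: "X$(f i)$j = X$i$(nx j)" for i j using X key by blast
      have row: "X$(f i)$j = X$(f i)$j0" for i j j0
        by (rule cyc[OF hb[unfolded s_def], where Z = "\<lambda>j. X$(f i)$j"])
           (metis e ff nx_def s_def)
      have "X$i$j = X$(f i)$undefined" for i j
      proof -
        obtain j1 where "nx j1 = j" using nx_surj[OF hb[unfolded s_def]] unfolding nx_def s_def by blast
        thus ?thesis using e row by metis
      qed
      hence "w = (\<chi> p. (\<lambda>i. X$(f i)$undefined) (fst p))" "\<forall>i. X$(f (f i))$undefined = X$(f i)$undefined"
        using w ff unfolding flatten_def by (auto simp: vec_eq_iff)
      thus "w \<in> S" unfolding S_def by (auto intro!: exI[where x="\<lambda>i. X$(f i)$undefined"])
    qed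
  next
    show "S \<subseteq> CAB A B"
    proof
      fix w assume "w \<in> S"
      then obtain y where y: "\<forall>i. y (f i) = y i" and w: "w = (\<chi> p. y (fst p))"
        unfolding S_def by auto
      let ?X = "(\<chi> i j. y i) :: 'a^'s^'r"
      have "A ** ?X = ?X ** B" using key y by simp
      moreover have "w = flatten ?X" unfolding w flatten_def by simp
      ultimately show "w \<in> CAB A B" unfolding CAB_def by blast
    qed
  qed
  define v :: "nat \<Rightarrow> 'a^('r\<times>'s)" where "v t = (\<chi> p. if bl (g (fst p)) = t then 1 else 0)" for t
  define V where "V = v ` {..<k}"
  have fg: "f i = f i'" if "bl (g i) = bl (g i')" for i i' unfolding f_def using that by simp
  have vS: "v t \<in> S" for t
    unfolding S_def v_def using blf by (auto intro!: exI[where x="\<lambda>i. if bl (g i) = t then 1 else 0"])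
  have subS: "vec.subspace S"
    unfolding vec.subspace_def
  proof (intro conjI ballI allI)
    show "0 \<in> S" unfolding S_def by (auto intro!: exI[where x="\<lambda>i. 0"] simp: vec_eq_iff)
  next
    fix x y assume "x \<in> S" "y \<in> S"
    then obtain a b where a: "\<forall>i. a (f i) = a i" "x = (\<chi> p. a (fst p))"
      and b: "\<forall>i. b (f i) = b i" "y = (\<chi> p. b (fst p))" unfolding S_def by auto
    show "x + y \<in> S" unfolding S_def using a b
      by (auto intro!: exI[where x="\<lambda>i. a i + b i"] simp: vec_eq_iff)
  next
    fix c x assume "x \<in> S"
    then obtain a where a: "\<forall>i. a (f i) = a i" "x = (\<chi> p. a (fst p))" unfolding S_def by auto
    show "c *s x \<in> S" unfolding S_def using a
      by (auto intro!: exI[where x="\<lambda>i. c * a i"] simp: vec_eq_iff)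
  qed
  have SV: "S = vec.span V"
  proof
    show "vec.span V \<subseteq> S" using vec.span_minimal[OF _ subS] vS unfolding V_def by blast
  next
    show "S \<subseteq> vec.span V"
    proof
      fix w assume "w \<in> S"
      then obtain y where y: "\<forall>i. y (f i) = y i" and w: "w = (\<chi> p. y (fst p))"
        unfolding S_def by auto
      have "w = (\<Sum>t<k. y (inv g (q * t)) *s v t)"
      proof (subst vec_eq_iff, intro allI)
        fix p :: "'r \<times> 's"
        have "(\<Sum>t<k. y (inv g (q * t)) *s v t) $ p = (\<Sum>t<k. y (inv g (q * t)) * (if bl (g (fst p)) = t then 1 else 0))"
          unfolding v_def by (simp add: sum_component)
        also have "\<dots> = (\<Sum>t<k. if t = bl (g (fst p)) then y (inv g (q * t)) else 0)"
          by (intro sum.cong) auto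
        also have "\<dots> = y (f (fst p))" using bllt unfolding f_def by simp
        finally show "w $ p = (\<Sum>t<k. y (inv g (q * t)) *s v t) $ p" using y w by simp
      qed
      also have "\<dots> \<in> vec.span V"
        by (intro vec.span_sum vec.span_scale vec.span_base) (auto simp: V_def)
      finally show "w \<in> vec.span V" .
    qed
  qed
  obtain j0 :: 's where True by simp
  have vat: "v t' $ (inv g (q * t), j0) = (if t = t' then 1 else 0)" if "t < k" for t t'
    unfolding v_def using gi[OF qbl, of "q*t"] blq[OF that] that by simp
  have vinj: "inj_on v {..<k}"
  proof (rule inj_onI)
    fix t t' assume "t \<in> {..<k}" "t' \<in> {..<k}" "v t = v t'"
    thus "t = t'" using vat[of t t] vat[of t t'] by (metis lessThan_iff one_neq_zero)
  qed
  have indep: "vec.independent V"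
  proof (rule vec.independent_if_scalars_zero)
    show "finite V" unfolding V_def by simp
  next
    fix c x assume sum0: "(\<Sum>x\<in>V. c x *s x) = 0" and "x \<in> V"
    then obtain t where t: "t < k" "x = v t" unfolding V_def by auto
    have "\<forall>z\<in>V. z $ (inv g (q * t), j0) = (if z = v t then 1 else 0)"
      using vat[OF t(1)] vinj t(1) unfolding V_def inj_on_def by auto
    hence "(\<Sum>z\<in>V. c z *s z) $ (inv g (q * t), j0) = (\<Sum>z\<in>V. if z = v t then c z else 0)"
      by (simp add: sum_component, intro sum.cong, auto)
    also have "\<dots> = c x" using t \<open>x \<in> V\<close> unfolding V_def by simp
    finally show "c x = 0" using sum0 by simp
  qed
  have dimk: "vec.dim (CAB A B) = k"
    using CS SV vec.dim_span_eq_card_independent[OF indep] card_image[OF vinj]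
    unfolding V_def by simp
  have hw: "hamming_weight ((\<chi> p. y (fst p)) :: 'a^('r\<times>'s)) = card {i. y i \<noteq> 0} * s" for y :: "'r \<Rightarrow> 'a"
  proof -
    have "{p. ((\<chi> p. y (fst p)) :: 'a^('r\<times>'s)) $ p \<noteq> 0} = {i. y i \<noteq> 0} \<times> (UNIV :: 's set)" by auto
    thus ?thesis unfolding hamming_weight_def s_def by (simp add: card_cartesian_product)
  qed
  have ginj: "inj_on (inv g) {0..<r}"
    using bij_betw_inv_into[OF gb] by (auto simp: bij_betw_def)
  have blk: "inv g ` {q*t..<q*t+q} \<subseteq> {i. bl (g i) = t}" if "t < k" for t
  proof
    fix i assume "i \<in> inv g ` {q*t..<q*t+q}"
    then obtain n where n: "q*t \<le> n" "n < q*t+q" "i = inv g n" by auto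
    have "q*t + q = q * Suc t" by simp
    also have "\<dots> \<le> q * k" using that by (intro mult_le_mono2) simp
    finally have nr: "n < r" using n qk by linarith
    have "n div q = t" using n by (intro div_nat_eqI) (auto simp: mult.commute)
    hence "bl n = t" unfolding bl_def using that by simp
    thus "i \<in> {i. bl (g i) = t}" using gi[OF nr] n by simp
  qed
  have cblk: "card (inv g ` {q*t..<q*t+q}) = q" if "t < k" for t
  proof -
    have "q*t + q = q * Suc t" by simp
    also have "\<dots> \<le> q * k" using that by (intro mult_le_mono2) simp
    finally have "{q*t..<q*t+q} \<subseteq> {0..<r}" using qk by auto
    hence "inj_on (inv g) {q*t..<q*t+q}" using ginj inj_on_subset by blast
    thus ?thesis by (simp add: card_image)
  qed
  have lb: "q * s \<le> hamming_weight w" if ws: "w \<in> S" and wn: "w \<noteq> 0" for w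
  proof -
    from ws obtain y where y: "\<forall>i. y (f i) = y i" and w: "w = (\<chi> p. y (fst p))"
      unfolding S_def by auto
    have "\<exists>i. y i \<noteq> 0"
    proof (rule ccontr)
      assume "\<not> (\<exists>i. y i \<noteq> 0)"
      hence "w = 0" using w by (simp add: vec_eq_iff)
      with wn show False ..
    qed
    then obtain i0 where i0: "y i0 \<noteq> 0" by blast
    define t where "t = bl (g i0)"
    have tk: "t < k" unfolding t_def by (rule bllt)
    have "{i. bl (g i) = t} \<subseteq> {i. y i \<noteq> 0}"
    proof
      fix i assume "i \<in> {i. bl (g i) = t}"
      hence fi: "f i = f i0" using fg[of i i0] t_def by simp
      have "y i = y (f i)" using y by simp
      also have "\<dots> = y (f i0)" using fi by simp
      also have "\<dots> = y i0" using y by simp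
      finally show "i \<in> {i. y i \<noteq> 0}" using i0 by simp
    qed
    hence sub: "inv g ` {q*t..<q*t+q} \<subseteq> {i. y i \<noteq> 0}" using blk[OF tk] by (rule order_trans[rotated])
    have "card (inv g ` {q*t..<q*t+q}) \<le> card {i. y i \<noteq> 0}"
      by (rule card_mono[OF _ sub]) simp
    hence "q \<le> card {i. y i \<noteq> 0}" using cblk[OF tk] by simp
    thus ?thesis using hw w by simp
  qed
  have v0S: "v 0 \<in> S" by (rule vS)
  have v0nz: "v 0 \<noteq> 0"
  proof
    assume "v 0 = 0"
    moreover have "v 0 $ (inv g 0, j0) = 1" using vat[of 0 0] assms(1) by simp
    ultimately show False by simp
  qed
  have wv0: "hamming_weight (v 0) = q * s"
  proof -
    have e: "v 0 = (\<chi> p. (\<lambda>i. if bl (g i) = 0 then (1::'a) else 0) (fst p))" unfolding v_def by simp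
    have "{i. bl (g i) = 0} \<subseteq> inv g ` {0..<q}"
    proof
      fix i assume "i \<in> {i. bl (g i) = 0}"
      hence "g i < q \<or> k = 1" unfolding bl_def using q1 assms(1) by (auto simp: min_def div_eq_0_iff split: if_splits)
      hence "g i < q" using gl[of i] q_def by auto
      thus "i \<in> inv g ` {0..<q}" using ig[of i] by (metis atLeastLessThan_iff image_eqI zero_le)
    qed
    hence "{i. bl (g i) = 0} = inv g ` {0..<q}" using blk[of 0] assms(1) by auto
    hence "card {i. (if bl (g i) = 0 then (1::'a) else 0) \<noteq> 0} = q" using cblk[of 0] assms(1) by simp
    moreover have "hamming_weight (v 0) = card {i. (if bl (g i) = 0 then (1::'a) else 0) \<noteq> 0} * s"
      unfolding e by (rule hw)
    ultimately show ?thesis by simp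
  qed
  have md: "min_distance (CAB A B) = q * s"
    unfolding min_distance_def CS
  proof (rule cInf_eq_minimum)
    show "q * s \<in> hamming_weight ` (S - {0})" using v0S v0nz wv0 by force
  next
    fix x assume "x \<in> hamming_weight ` (S - {0})"
    thus "q * s \<le> x" using lb by auto
  qed
  show ?thesis using dimk md unfolding q_def r_def s_def by blast
qed

end
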